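(* Let $I$ and $J$ be two conserved intervals of $\mathcal{P}$. If there exists an element $f\in F_I\cap F_J$, then $\mathrm{Container}(I)=\mathrm{Container}(J)$.
   Context: Let $n\geq 2$ and let $\mathcal{P}=\{P_1,\ldots,P_K\}$ be signed permutations of $\{1,\ldots,n\}$: each $P_k$ is an ordering of $1,\ldots,n$ in which each element carries a sign $+$ or $-$. Assume $P_1=(+1,+2,\ldots,+n)$ and that every $P_k$ has first element $+1$ and last element $+n$. For integers $i\leq j$ write $(i..j)=\{i,\ldots,j\}$. A conserved interval of $\mathcal{P}$ is either a singleton, or a set $(a..c)$ with $a<c$ which (ignoring signs) occupies consecutive positions in every $P_k$ and which, in every $P_k$, has either $+a$ at its left end and $+c$ at its right end, or $-c$ at its left end and $-a$ at its right end. Two intervals $(i..j)$ and $(k..l)$ overlap if $i<k\leq j<l$ or $k<i\leq l<j$. A conserved interval is strong if it has at least two elements and overlaps no other conserved interval. For a conserved interval $I=(a..c)$, a set $\{f_1,\ldots,f_k\}$ with $a=f_1<\cdots<f_k=c$ is a set of frontiers of $I$ if $(f_i..f_j)$ is conserved for all $1\leq i<j\leq k$; $F_I$ denotes the unique inclusion-maximal set of frontiers of $I$ (the union of all sets of frontiers of $I$). $\mathrm{Container}(I)$ is the smallest strong conserved interval containing $I$. *)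

theory Defs
  imports Main
begin

text \<open>A signed permutation of 1..n is a list of nonzero integers; the absolute value
  is the element, the sign of the entry is the sign of the element.
  Intervals (i..j) are represented by pairs (i,j) of naturals with i <= j.\<close>

definition signed_perm :: "nat \<Rightarrow> int list \<Rightarrow> bool" where
  "signed_perm n p \<longleftrightarrow> length p = n \<and> distinct (map (\<lambda>x. nat \<bar>x\<bar>) p)
     \<and> (\<lambda>x. nat \<bar>x\<bar>) ` set p = {1..n}"

definition valid_family :: "nat \<Rightarrow> int list list \<Rightarrow> bool" where
  "valid_family n Ps \<longleftrightarrow> 2 \<le> n \<and> Ps \<noteq> [] \<and> hd Ps = map int [1..<n+1]
     \<and> (\<forall>p\<in>set Ps. signed_perm n p \<and> hd p = 1 \<and> last p = int n)"

definition ivl :: "nat \<times> nat \<Rightarrow> nat set" where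
  "ivl I = {fst I..snd I}"

definition conserved :: "nat \<Rightarrow> int list list \<Rightarrow> nat \<times> nat \<Rightarrow> bool" where
  "conserved n Ps I \<longleftrightarrow> (let a = fst I; c = snd I in
     1 \<le> a \<and> a \<le> c \<and> c \<le> n \<and>
     (a < c \<longrightarrow> (\<forall>p\<in>set Ps. \<exists>i. i + (c - a) < length p
        \<and> (\<lambda>x. nat \<bar>x\<bar>) ` set (take (c - a + 1) (drop i p)) = {a..c}
        \<and> ((p ! i = int a \<and> p ! (i + (c - a)) = int c)
           \<or> (p ! i = - int c \<and> p ! (i + (c - a)) = - int a)))))"

definition overlap :: "nat \<times> nat \<Rightarrow> nat \<times> nat \<Rightarrow> bool" where
  "overlap I J \<longleftrightarrow> (let i = fst I; j = snd I; k = fst J; l = snd J in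
     (i < k \<and> k \<le> j \<and> j < l) \<or> (k < i \<and> i \<le> l \<and> l < j))"

definition strong :: "nat \<Rightarrow> int list list \<Rightarrow> nat \<times> nat \<Rightarrow> bool" where
  "strong n Ps I \<longleftrightarrow> conserved n Ps I \<and> fst I < snd I
     \<and> (\<forall>J. conserved n Ps J \<longrightarrow> \<not> overlap I J)"

definition is_frontier_set :: "nat \<Rightarrow> int list list \<Rightarrow> nat \<times> nat \<Rightarrow> nat set \<Rightarrow> bool" where
  "is_frontier_set n Ps I F \<longleftrightarrow> fst I \<in> F \<and> snd I \<in> F \<and> F \<subseteq> ivl I
     \<and> (\<forall>x\<in>F. \<forall>y\<in>F. x < y \<longrightarrow> conserved n Ps (x, y))"

definition frontiers :: "nat \<Rightarrow> int list list \<Rightarrow> nat \<times> nat \<Rightarrow> nat set" where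
  "frontiers n Ps I = \<Union>{F. is_frontier_set n Ps I F}"

definition container :: "nat \<Rightarrow> int list list \<Rightarrow> nat \<times> nat \<Rightarrow> nat \<times> nat" where
  "container n Ps I = (THE S. strong n Ps S \<and> ivl I \<subseteq> ivl S
     \<and> (\<forall>S'. strong n Ps S' \<and> ivl I \<subseteq> ivl S' \<longrightarrow> ivl S \<subseteq> ivl S'))"

end

theory Submission
  imports Defs
begin

lemma img_take:
  fixes p :: "int list"
  assumes "i + k < length p"
  shows "(\<lambda>x. nat \<bar>x\<bar>) ` set (take (k+1) (drop i p)) = (\<lambda>t. nat \<bar>p!t\<bar>) ` {i..i+k}"
proof -
  have "set (take (k+1) (drop i p)) = (\<lambda>t. p!t) ` {i..i+k}"
  proof
    show "set (take (k+1) (drop i p)) \<subseteq> (\<lambda>t. p!t) ` {i..i+k}"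
    proof
      fix x assume "x \<in> set (take (k+1) (drop i p))"
      then obtain t where t: "t < length (take (k+1) (drop i p))" "x = take (k+1) (drop i p) ! t"
        by (metis in_set_conv_nth)
      then have "t \<le> k" "x = p ! (i+t)" using assms by auto
      then show "x \<in> (\<lambda>t. p!t) ` {i..i+k}" by force
    qed
  next
    show "(\<lambda>t. p!t) ` {i..i+k} \<subseteq> set (take (k+1) (drop i p))"
    proof
      fix x assume "x \<in> (\<lambda>t. p!t) ` {i..i+k}"
      then obtain t where t: "i \<le> t" "t \<le> i+k" "x = p!t" by auto
      have "take (k+1) (drop i p) ! (t - i) = p ! t" using t assms by auto
      moreover have "t - i < length (take (k+1) (drop i p))" using t assms by auto
      ultimately show "x \<in> set (take (k+1) (drop i p))" using t by (metis nth_mem)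
    qed
  qed
  then show ?thesis by (simp add: image_image)
qed

lemma pos_unique:
  fixes p :: "int list"
  assumes "distinct (map (\<lambda>x. nat \<bar>x\<bar>) p)" "s < length p" "t < length p"
    "nat \<bar>p!s\<bar> = nat \<bar>p!t\<bar>"
  shows "s = t"
proof -
  have "map (\<lambda>x. nat \<bar>x\<bar>) p ! s = map (\<lambda>x. nat \<bar>x\<bar>) p ! t" using assms by simp
  then show ?thesis using assms nth_eq_iff_index_eq by (metis length_map)
qed

lemma split_img:
  fixes h :: "nat \<Rightarrow> nat"
  assumes inj: "inj_on h {lo..hi}" and "lo \<le> m" "m \<le> hi"
  shows "h ` {lo..m} = (h ` {lo..hi} - h ` {m..hi}) \<union> {h m}"
    and "h ` {m..hi} = (h ` {lo..hi} - h ` {lo..m}) \<union> {h m}"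
proof -
  have a: "h ` ({lo..hi} - {m..hi}) = h ` {lo..hi} - h ` {m..hi}"
    using assms by (intro inj_on_image_set_diff) auto
  have b: "h ` ({lo..hi} - {lo..m}) = h ` {lo..hi} - h ` {lo..m}"
    using assms by (intro inj_on_image_set_diff) auto
  have "{lo..m} = ({lo..hi} - {m..hi}) \<union> {m}" using assms by auto
  then show "h ` {lo..m} = (h ` {lo..hi} - h ` {m..hi}) \<union> {h m}" using a by auto
  have "{m..hi} = ({lo..hi} - {lo..m}) \<union> {m}" using assms by auto
  then show "h ` {m..hi} = (h ` {lo..hi} - h ` {lo..m}) \<union> {h m}" using b by auto
qed

lemma inj_h:
  fixes p :: "int list"
  assumes "distinct (map (\<lambda>x. nat \<bar>x\<bar>) p)" "hi < length p"
  shows "inj_on (\<lambda>t. nat \<bar>p!t\<bar>) {lo..hi}"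
  using pos_unique[OF assms(1)] assms(2) unfolding inj_on_def by auto

lemma L1p:
  fixes p :: "int list" and a b c i j :: nat
  assumes d: "distinct (map (\<lambda>x. nat \<bar>x\<bar>) p)" and ab: "a < b" "b < c"
    and i1: "i+(c-a) < length p" and i2: "(\<lambda>t. nat \<bar>p!t\<bar>) ` {i..i+(c-a)} = {a..c}"
    and i3: "(p!i = int a \<and> p!(i+(c-a)) = int c) \<or> (p!i = - int c \<and> p!(i+(c-a)) = - int a)"
    and j1: "j+(c-b) < length p" and j2: "(\<lambda>t. nat \<bar>p!t\<bar>) ` {j..j+(c-b)} = {b..c}"
    and j3: "(p!j = int b \<and> p!(j+(c-b)) = int c) \<or> (p!j = - int c \<and> p!(j+(c-b)) = - int b)"
  shows "\<exists>i'. i'+(b-a) < length p \<and> (\<lambda>t. nat \<bar>p!t\<bar>) ` {i'..i'+(b-a)} = {a..b}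
     \<and> ((p!i' = int a \<and> p!(i'+(b-a)) = int b) \<or> (p!i' = - int b \<and> p!(i'+(b-a)) = - int a))"
proof -
  let ?h = "\<lambda>t. nat \<bar>p!t\<bar>"
  have inj: "inj_on ?h {i..i+(c-a)}" using inj_h[OF d i1] .
  have U: "\<And>s t. s < length p \<Longrightarrow> t < length p \<Longrightarrow> ?h s = ?h t \<Longrightarrow> s = t"
    using pos_unique[OF d] by blast
  from i3 show ?thesis
  proof
    assume A: "p!i = int a \<and> p!(i+(c-a)) = int c"
    from j3 show ?thesis
    proof
      assume B: "p!j = int b \<and> p!(j+(c-b)) = int c"
      have "j+(c-b) = i+(c-a)" using U[OF j1 i1] A B by simp
      then have jj: "j = i + (b-a)" using ab by simp
      have "?h ` {i..j} = (?h ` {i..i+(c-a)} - ?h ` {j..i+(c-a)}) \<union> {?h j}"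
        using split_img(1)[OF inj, of j] jj ab by simp
      also have "\<dots> = {a..b}" using i2 j2 jj ab B by auto
      finally show ?thesis using jj i1 A B ab by (intro exI[of _ i]) auto
    next
      assume B: "p!j = - int c \<and> p!(j+(c-b)) = - int b"
      have "j = i+(c-a)" using U[of j "i+(c-a)"] j1 i1 A B by simp
      then show ?thesis using A B ab by simp
    qed
  next
    assume A: "p!i = - int c \<and> p!(i+(c-a)) = - int a"
    from j3 show ?thesis
    proof
      assume B: "p!j = int b \<and> p!(j+(c-b)) = int c"
      have "j+(c-b) = i" using U[of "j+(c-b)" i] j1 i1 A B by simp
      then show ?thesis using A B ab by simp
    next
      assume B: "p!j = - int c \<and> p!(j+(c-b)) = - int b"
      have jj: "j = i" using U[of j i] j1 i1 A B by simp
      define m where "m = i + (c-b)"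
      have "?h ` {m..i+(c-a)} = (?h ` {i..i+(c-a)} - ?h ` {i..m}) \<union> {?h m}"
        using split_img(2)[OF inj, of m] m_def ab by simp
      also have "\<dots> = {a..b}" using i2 j2 jj ab B m_def by auto
      finally show ?thesis using jj i1 A B ab m_def by (intro exI[of _ m]) auto
    qed
  qed
qed

lemma L2p:
  fixes p :: "int list" and a b c i j :: nat
  assumes d: "distinct (map (\<lambda>x. nat \<bar>x\<bar>) p)" and ab: "0 < a" "a < b" "b < c"
    and i1: "i+(c-a) < length p" and i2: "(\<lambda>t. nat \<bar>p!t\<bar>) ` {i..i+(c-a)} = {a..c}"
    and i3: "(p!i = int a \<and> p!(i+(c-a)) = int c) \<or> (p!i = - int c \<and> p!(i+(c-a)) = - int a)"
    and j1: "j+(b-a) < length p" and j2: "(\<lambda>t. nat \<bar>p!t\<bar>) ` {j..j+(b-a)} = {a..b}"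
    and j3: "(p!j = int a \<and> p!(j+(b-a)) = int b) \<or> (p!j = - int b \<and> p!(j+(b-a)) = - int a)"
  shows "\<exists>i'. i'+(c-b) < length p \<and> (\<lambda>t. nat \<bar>p!t\<bar>) ` {i'..i'+(c-b)} = {b..c}
     \<and> ((p!i' = int b \<and> p!(i'+(c-b)) = int c) \<or> (p!i' = - int c \<and> p!(i'+(c-b)) = - int b))"
proof -
  let ?h = "\<lambda>t. nat \<bar>p!t\<bar>"
  have inj: "inj_on ?h {i..i+(c-a)}" using inj_h[OF d i1] .
  have U: "\<And>s t. s < length p \<Longrightarrow> t < length p \<Longrightarrow> ?h s = ?h t \<Longrightarrow> s = t"
    using pos_unique[OF d] by blast
  from i3 show ?thesis
  proof
    assume A: "p!i = int a \<and> p!(i+(c-a)) = int c"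
    from j3 show ?thesis
    proof
      assume B: "p!j = int a \<and> p!(j+(b-a)) = int b"
      have jj: "j = i" using U[of j i] j1 i1 A B by simp
      define m where "m = i + (b-a)"
      have "?h ` {m..i+(c-a)} = (?h ` {i..i+(c-a)} - ?h ` {i..m}) \<union> {?h m}"
        using split_img(2)[OF inj, of m] m_def ab by simp
      also have "\<dots> = {b..c}" using i2 j2 jj ab B m_def by auto
      finally show ?thesis using jj i1 A B ab m_def by (intro exI[of _ m]) auto
    next
      assume B: "p!j = - int b \<and> p!(j+(b-a)) = - int a"
      have "j+(b-a) = i" using U[of "j+(b-a)" i] j1 i1 A B by simp
      then show ?thesis using A B ab by simp
    qed
  next
    assume A: "p!i = - int c \<and> p!(i+(c-a)) = - int a"
    from j3 show ?thesis
    proof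
      assume B: "p!j = int a \<and> p!(j+(b-a)) = int b"
      have "j = i+(c-a)" using U[of j "i+(c-a)"] j1 i1 A B by simp
      then show ?thesis using A B ab by simp
    next
      assume B: "p!j = - int b \<and> p!(j+(b-a)) = - int a"
      have "j+(b-a) = i+(c-a)" using U[OF j1 i1] A B by simp
      then have jj: "j = i + (c-b)" using ab by simp
      have "?h ` {i..j} = (?h ` {i..i+(c-a)} - ?h ` {j..i+(c-a)}) \<union> {?h j}"
        using split_img(1)[OF inj, of j] jj ab by simp
      also have "\<dots> = {b..c}" using i2 j2 jj ab B by auto
      finally show ?thesis using jj i1 A B ab by (intro exI[of _ i]) auto
    qed
  qed
qed

lemma cons_get:
  assumes "conserved n Ps (a,c)" "a < c" "p \<in> set Ps"
  shows "\<exists>i. i+(c-a) < length p \<and> (\<lambda>t. nat \<bar>p!t\<bar>) ` {i..i+(c-a)} = {a..c}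
     \<and> ((p!i = int a \<and> p!(i+(c-a)) = int c) \<or> (p!i = - int c \<and> p!(i+(c-a)) = - int a))"
  using assms img_take unfolding conserved_def Let_def by (metis fst_conv snd_conv)

lemma cons_mk:
  assumes "1 \<le> a" "a < c" "c \<le> n"
    "\<And>p. p \<in> set Ps \<Longrightarrow> \<exists>i. i+(c-a) < length p \<and> (\<lambda>t. nat \<bar>p!t\<bar>) ` {i..i+(c-a)} = {a..c}
     \<and> ((p!i = int a \<and> p!(i+(c-a)) = int c) \<or> (p!i = - int c \<and> p!(i+(c-a)) = - int a))"
  shows "conserved n Ps (a,c)"
  unfolding conserved_def Let_def fst_conv snd_conv
  using assms img_take by (metis less_imp_le)

lemma dist_of:
  assumes "valid_family n Ps" "p \<in> set Ps"
  shows "distinct (map (\<lambda>x. nat \<bar>x\<bar>) p)"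
  using assms unfolding valid_family_def signed_perm_def by blast

lemma cons_bounds:
  assumes "conserved n Ps (a,c)" shows "1 \<le> a" "a \<le> c" "c \<le> n"
  using assms unfolding conserved_def Let_def by auto

lemma L1:
  assumes v: "valid_family n Ps" and "conserved n Ps (a,c)" "conserved n Ps (b,c)" "a < b" "b < c"
  shows "conserved n Ps (a,b)"
proof (rule cons_mk)
  show "1 \<le> a" "a < b" "b \<le> n" using cons_bounds assms by (auto, meson le_trans less_imp_le)
next
  fix p assume p: "p \<in> set Ps"
  obtain i where i: "i+(c-a) < length p" "(\<lambda>t. nat \<bar>p!t\<bar>) ` {i..i+(c-a)} = {a..c}"
     "(p!i = int a \<and> p!(i+(c-a)) = int c) \<or> (p!i = - int c \<and> p!(i+(c-a)) = - int a)"
    using cons_get[OF assms(2) _ p] assms by (meson less_trans)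
  obtain j where j: "j+(c-b) < length p" "(\<lambda>t. nat \<bar>p!t\<bar>) ` {j..j+(c-b)} = {b..c}"
     "(p!j = int b \<and> p!(j+(c-b)) = int c) \<or> (p!j = - int c \<and> p!(j+(c-b)) = - int b)"
    using cons_get[OF assms(3) _ p] assms by blast
  show "\<exists>i. i+(b-a) < length p \<and> (\<lambda>t. nat \<bar>p!t\<bar>) ` {i..i+(b-a)} = {a..b}
     \<and> ((p!i = int a \<and> p!(i+(b-a)) = int b) \<or> (p!i = - int b \<and> p!(i+(b-a)) = - int a))"
    using L1p[OF dist_of[OF v p] assms(4,5) i j] .
qed

lemma L2:
  assumes v: "valid_family n Ps" and "conserved n Ps (a,c)" "conserved n Ps (a,b)" "a < b" "b < c"
  shows "conserved n Ps (b,c)"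
proof (rule cons_mk)
  show "1 \<le> b" "b < c" using assms by auto
  show "c \<le> n" using cons_bounds(3)[OF assms(2)] .
next
  fix p assume p: "p \<in> set Ps"
  have a0: "0 < a" using cons_bounds(1)[OF assms(2)] by simp
  obtain i where i: "i+(c-a) < length p" "(\<lambda>t. nat \<bar>p!t\<bar>) ` {i..i+(c-a)} = {a..c}"
     "(p!i = int a \<and> p!(i+(c-a)) = int c) \<or> (p!i = - int c \<and> p!(i+(c-a)) = - int a)"
    using cons_get[OF assms(2) _ p] assms by (meson less_trans)
  obtain j where j: "j+(b-a) < length p" "(\<lambda>t. nat \<bar>p!t\<bar>) ` {j..j+(b-a)} = {a..b}"
     "(p!j = int a \<and> p!(j+(b-a)) = int b) \<or> (p!j = - int b \<and> p!(j+(b-a)) = - int a)"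
    using cons_get[OF assms(3) _ p] assms by blast
  show "\<exists>i. i+(c-b) < length p \<and> (\<lambda>t. nat \<bar>p!t\<bar>) ` {i..i+(c-b)} = {b..c}
     \<and> ((p!i = int b \<and> p!(i+(c-b)) = int c) \<or> (p!i = - int c \<and> p!(i+(c-b)) = - int b))"
    using L2p[OF dist_of[OF v p] a0 assms(4,5) i j] .
qed

lemma front_get:
  assumes "f \<in> frontiers n Ps (a,c)"
  shows "a \<le> f" "f \<le> c" "a < f \<Longrightarrow> conserved n Ps (a,f)" "f < c \<Longrightarrow> conserved n Ps (f,c)"
proof -
  obtain F where F: "is_frontier_set n Ps (a,c) F" "f \<in> F"
    using assms unfolding frontiers_def by auto
  then show "a \<le> f" "f \<le> c" unfolding is_frontier_set_def ivl_def by auto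
  show "a < f \<Longrightarrow> conserved n Ps (a,f)" "f < c \<Longrightarrow> conserved n Ps (f,c)"
    using F unfolding is_frontier_set_def by auto
qed

lemma key:
  assumes v: "valid_family n Ps" and cI: "conserved n Ps I"
    and fI: "f \<in> ivl I" and fJ: "f \<in> frontiers n Ps J"
    and sS: "strong n Ps S" and sub: "ivl I \<subseteq> ivl S"
  shows "ivl J \<subseteq> ivl S"
proof -
  obtain s1 s2 where S: "S = (s1,s2)" by (cases S)
  obtain a' c' where J: "J = (a',c')" by (cases J)
  have cS: "conserved n Ps (s1,s2)" and s12: "s1 < s2"
    and nov: "\<And>K. conserved n Ps K \<Longrightarrow> \<not> overlap (s1,s2) K"
    using sS S unfolding strong_def by auto
  have fs: "s1 \<le> f" "f \<le> s2" using fI sub S unfolding ivl_def by auto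
  note fr = front_get[OF fJ[unfolded J]]
  have L: "s1 \<le> a'"
  proof (rule ccontr)
    assume "\<not> s1 \<le> a'" then have as: "a' < s1" by simp
    show False
    proof (cases "f < s2")
      case True
      have "conserved n Ps (a',f)" using fr(3) as fs by simp
      with nov have "\<not> overlap (s1,s2) (a',f)" by blast
      then show False using as fs True unfolding overlap_def by simp
    next
      case False
      then have "f = s2" using fs by simp
      then have "conserved n Ps (a',s2)" using fr(3) as fs by simp
      then have "conserved n Ps (a',s1)" using L1[OF v _ cS as s12] by blast
      with nov have "\<not> overlap (s1,s2) (a',s1)" by blast
      then show False using as s12 unfolding overlap_def by simp
    qed
  qed
  have R: "c' \<le> s2"
  proof (rule ccontr)
    assume "\<not> c' \<le> s2" then have cs: "s2 < c'" by simp
    show False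
    proof (cases "s1 < f")
      case True
      have "conserved n Ps (f,c')" using fr(4) cs fs by simp
      with nov have "\<not> overlap (s1,s2) (f,c')" by blast
      then show False using cs fs True unfolding overlap_def by simp
    next
      case False
      then have "f = s1" using fs by simp
      then have "conserved n Ps (s1,c')" using fr(4) cs fs by simp
      then have "conserved n Ps (s2,c')" using L2[OF v _ cS s12 cs] by blast
      with nov have "\<not> overlap (s1,s2) (s2,c')" by blast
      then show False using cs s12 unfolding overlap_def by simp
    qed
  qed
  show ?thesis using L R S J unfolding ivl_def by auto
qed

lemma front_in_ivl: "f \<in> frontiers n Ps I \<Longrightarrow> f \<in> ivl I"
  unfolding frontiers_def is_frontier_set_def by auto

theorem lemma8:
  fixes n :: nat and Ps :: "int list list" and I J :: "nat \<times> nat" and f :: nat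
  assumes "valid_family n Ps"
    and "conserved n Ps I" and "conserved n Ps J"
    and "f \<in> frontiers n Ps I \<inter> frontiers n Ps J"
  shows "container n Ps I = container n Ps J"
proof -
  have fI: "f \<in> frontiers n Ps I" and fJ: "f \<in> frontiers n Ps J" using assms(4) by auto
  have eq: "\<And>S. strong n Ps S \<Longrightarrow> (ivl I \<subseteq> ivl S) = (ivl J \<subseteq> ivl S)"
    using key[OF assms(1) assms(2) front_in_ivl[OF fI] fJ]
          key[OF assms(1) assms(3) front_in_ivl[OF fJ] fI] by blast
  have "(\<lambda>S. strong n Ps S \<and> ivl I \<subseteq> ivl S
     \<and> (\<forall>S'. strong n Ps S' \<and> ivl I \<subseteq> ivl S' \<longrightarrow> ivl S \<subseteq> ivl S'))
     = (\<lambda>S. strong n Ps S \<and> ivl J \<subseteq> ivl S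
     \<and> (\<forall>S'. strong n Ps S' \<and> ivl J \<subseteq> ivl S' \<longrightarrow> ivl S \<subseteq> ivl S'))"
  proof (rule ext)
    fix S
    have e2: "(\<forall>S'. strong n Ps S' \<and> ivl I \<subseteq> ivl S' \<longrightarrow> ivl S \<subseteq> ivl S')
       = (\<forall>S'. strong n Ps S' \<and> ivl J \<subseteq> ivl S' \<longrightarrow> ivl S \<subseteq> ivl S')"
      using eq by (meson)
    show "(strong n Ps S \<and> ivl I \<subseteq> ivl S
     \<and> (\<forall>S'. strong n Ps S' \<and> ivl I \<subseteq> ivl S' \<longrightarrow> ivl S \<subseteq> ivl S'))
     = (strong n Ps S \<and> ivl J \<subseteq> ivl S
     \<and> (\<forall>S'. strong n Ps S' \<and> ivl J \<subseteq> ivl S' \<longrightarrow> ivl S \<subseteq> ivl S'))"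
      using e2 eq[of S] by (simp only:) meson
  qed
  then show ?thesis unfolding container_def by (simp only:)
qed

end
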